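(* Consider the $(a,b,c)$ model with $a\le b\le c$ positive integers. There are constants $\kappa$ and $\lambda$, depending only on $a,b,c$, such that the following holds: if the cube $[0,l]^3$ is internally spanned, then for every $k\in[1,\frac{l-\lambda}{\kappa}]$ there is a rectangular block (contained in $[0,l]^3$) whose longest side has length in $[k,\kappa k+\lambda]$ and which is weakly crossed.
   Context: The $(a,b,c)$ model: the neighborhood of $(x,y,z)\in\mathbb Z^3$ consists of $(x\pm i,y,z)$, $1\le i\le a$; $(x,y\pm j,z)$, $1\le j\le b$; $(x,y,z\pm k)$, $1\le k\le c$. Given an initial set of occupied sites, the bootstrap rule repeatedly occupies every empty site having at least $a+b+c$ occupied sites in its neighborhood, until no change. A cube is internally spanned if running the bootstrap rule using only the initially occupied sites inside it results in all its sites being occupied. Weak enhancement of a set of sites $\rho$: (1) evolve by the $(a,b,c)$ bootstrap rule, taking into account only occupied sites in $\rho$; (2) then, for every site that became occupied (was initially empty), draw line segments from it to each site in its neighborhood that is occupied in the final configuration, and additionally occupy every empty site crossed by at least one such segment (such sites are called weakly spanned). A rectangular block is weakly crossed if, after weakly enhancing it, it is internally crossed in every direction, i.e. for each of the three coordinate directions there is a path of occupied sites connecting the two opposite faces of the block orthogonal to that direction. *)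

theory Defs
  imports Complex_Main
begin

type_synonym site = "int \<times> int \<times> int"

definition coord :: "nat \<Rightarrow> site \<Rightarrow> int" where
  "coord d p = (case p of (x, y, z) \<Rightarrow> if d = 0 then x else if d = 1 then y else z)"

definition nbhd :: "nat \<Rightarrow> nat \<Rightarrow> nat \<Rightarrow> site \<Rightarrow> site set" where
  "nbhd a b c p = (case p of (x, y, z) \<Rightarrow>
      {(x + i, y, z) | i. 1 \<le> \<bar>i\<bar> \<and> \<bar>i\<bar> \<le> int a}
    \<union> {(x, y + j, z) | j. 1 \<le> \<bar>j\<bar> \<and> \<bar>j\<bar> \<le> int b}
    \<union> {(x, y, z + k) | k. 1 \<le> \<bar>k\<bar> \<and> \<bar>k\<bar> \<le> int c})"

definition bp_step :: "nat \<Rightarrow> nat \<Rightarrow> nat \<Rightarrow> site set \<Rightarrow> site set" where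
  "bp_step a b c S = S \<union> {p. a + b + c \<le> card (nbhd a b c p \<inter> S)}"

definition bp_closure :: "nat \<Rightarrow> nat \<Rightarrow> nat \<Rightarrow> site set \<Rightarrow> site set" where
  "bp_closure a b c A = (\<Union>n. (bp_step a b c ^^ n) A)"

definition box :: "site \<Rightarrow> site \<Rightarrow> site set" where
  "box lo hi = {p. \<forall>d<3. coord d lo \<le> coord d p \<and> coord d p \<le> coord d hi}"

definition longest_side :: "site \<Rightarrow> site \<Rightarrow> int" where
  "longest_side lo hi = max (coord 0 hi - coord 0 lo) (max (coord 1 hi - coord 1 lo) (coord 2 hi - coord 2 lo))"

definition internally_spanned :: "nat \<Rightarrow> nat \<Rightarrow> nat \<Rightarrow> site set \<Rightarrow> site set \<Rightarrow> bool" where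
  "internally_spanned a b c A Q \<longleftrightarrow> Q \<subseteq> bp_closure a b c (A \<inter> Q)"

definition on_segment :: "site \<Rightarrow> site \<Rightarrow> site \<Rightarrow> bool" where
  "on_segment v u w \<longleftrightarrow> (\<exists>t::real. 0 \<le> t \<and> t \<le> 1 \<and>
     (\<forall>d<3. real_of_int (coord d w) = real_of_int (coord d v) + t * (real_of_int (coord d u) - real_of_int (coord d v))))"

definition weak_enhancement :: "nat \<Rightarrow> nat \<Rightarrow> nat \<Rightarrow> site set \<Rightarrow> site set" where
  "weak_enhancement a b c \<rho> = (let C = bp_closure a b c \<rho> in
     C \<union> {w. \<exists>v \<in> C - \<rho>. \<exists>u \<in> nbhd a b c v \<inter> C. on_segment v u w})"

definition nn_adj :: "site \<Rightarrow> site \<Rightarrow> bool" where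
  "nn_adj p q \<longleftrightarrow> (\<Sum>d<3. \<bar>coord d p - coord d q\<bar>) = 1"

definition crossed_in_dir :: "site set \<Rightarrow> site \<Rightarrow> site \<Rightarrow> nat \<Rightarrow> bool" where
  "crossed_in_dir S lo hi d \<longleftrightarrow> (\<exists>ps. ps \<noteq> [] \<and> set ps \<subseteq> S \<inter> box lo hi \<and>
     (\<forall>i. Suc i < length ps \<longrightarrow> nn_adj (ps ! i) (ps ! Suc i)) \<and>
     coord d (hd ps) = coord d lo \<and> coord d (last ps) = coord d hi)"

definition internally_crossed :: "site set \<Rightarrow> site \<Rightarrow> site \<Rightarrow> bool" where
  "internally_crossed S lo hi \<longleftrightarrow> (\<forall>d<3. crossed_in_dir S lo hi d)"

definition weakly_crossed :: "nat \<Rightarrow> nat \<Rightarrow> nat \<Rightarrow> site set \<Rightarrow> site \<Rightarrow> site \<Rightarrow> bool" where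
  "weakly_crossed a b c A lo hi \<longleftrightarrow>
     internally_crossed (weak_enhancement a b c (A \<inter> box lo hi)) lo hi"

end

theory Submission
  imports Defs
begin

lemma coord_simps[simp]: "coord 0 (x,y,z) = x" "coord (Suc 0) (x,y,z) = y" "coord 2 (x,y,z) = z"
  by (auto simp: coord_def)

lemma finite_absset: "finite {i::int. 1 \<le> \<bar>i\<bar> \<and> \<bar>i\<bar> \<le> int a}"
  by (rule finite_subset[of _ "{- int a .. int a}"]) auto

lemma nbhd_eq: "nbhd a b c (x,y,z) =
   (\<lambda>i. (x+i,y,z)) ` {i. 1 \<le> \<bar>i\<bar> \<and> \<bar>i\<bar> \<le> int a}
 \<union> (\<lambda>j. (x,y+j,z)) ` {j. 1 \<le> \<bar>j\<bar> \<and> \<bar>j\<bar> \<le> int b}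
 \<union> (\<lambda>k. (x,y,z+k)) ` {k. 1 \<le> \<bar>k\<bar> \<and> \<bar>k\<bar> \<le> int c}"
  unfolding nbhd_def by auto

lemma finite_nbhd: "finite (nbhd a b c p)"
  by (cases p) (simp add: nbhd_eq finite_absset)

context fixes a b c :: nat begin

lemma bp_step_incr: "S \<subseteq> bp_step a b c S"
  by (auto simp: bp_step_def)

lemma bp_step_mono: "S \<subseteq> T \<Longrightarrow> bp_step a b c S \<subseteq> bp_step a b c T"
proof
  fix p assume S: "S \<subseteq> T" and p: "p \<in> bp_step a b c S"
  show "p \<in> bp_step a b c T"
  proof (cases "p \<in> S")
    case True then show ?thesis using S bp_step_incr by blast
  next
    case False
    then have "a + b + c \<le> card (nbhd a b c p \<inter> S)" using p by (simp add: bp_step_def)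
    also have "\<dots> \<le> card (nbhd a b c p \<inter> T)"
      using S by (intro card_mono) (auto simp: finite_nbhd)
    finally show ?thesis by (simp add: bp_step_def)
  qed
qed

lemma iter_mono: "S \<subseteq> T \<Longrightarrow> (bp_step a b c ^^ n) S \<subseteq> (bp_step a b c ^^ n) T"
  by (induction n) (simp_all add: bp_step_mono)

lemma iter_incr: "m \<le> n \<Longrightarrow> (bp_step a b c ^^ m) S \<subseteq> (bp_step a b c ^^ n) S"
proof (induction n)
  case 0 then show ?case by simp
next
  case (Suc n)
  show ?case
  proof (cases "m = Suc n")
    case False
    then have "m \<le> n" using Suc.prems by simp
    then have "(bp_step a b c ^^ m) S \<subseteq> (bp_step a b c ^^ n) S" by (rule Suc.IH)
    also have "\<dots> \<subseteq> bp_step a b c ((bp_step a b c ^^ n) S)" by (rule bp_step_incr)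
    finally show ?thesis by simp
  next
    case True then show ?thesis by simp
  qed
qed

lemma closure_mono: "S \<subseteq> T \<Longrightarrow> bp_closure a b c S \<subseteq> bp_closure a b c T"
proof
  fix x assume "S \<subseteq> T" "x \<in> bp_closure a b c S"
  then obtain n where "x \<in> (bp_step a b c ^^ n) S" by (auto simp: bp_closure_def)
  then have "x \<in> (bp_step a b c ^^ n) T" using iter_mono[OF \<open>S \<subseteq> T\<close>] by blast
  then show "x \<in> bp_closure a b c T" by (auto simp: bp_closure_def)
qed

lemma closure_incr: "S \<subseteq> bp_closure a b c S"
proof
  fix x assume "x \<in> S"
  then have "x \<in> (bp_step a b c ^^ 0) S" by simp
  then show "x \<in> bp_closure a b c S" unfolding bp_closure_def by blast
qed

lemma finite_in_chain:
  assumes "finite X" "X \<subseteq> (\<Union>n. (bp_step a b c ^^ n) S)"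
  shows "\<exists>N. X \<subseteq> (bp_step a b c ^^ N) S"
  using assms
proof (induction X rule: finite_induct)
  case empty then show ?case by simp
next
  case (insert x F)
  then obtain N where N: "F \<subseteq> (bp_step a b c ^^ N) S" by auto
  from insert obtain M where M: "x \<in> (bp_step a b c ^^ M) S" by auto
  have "F \<subseteq> (bp_step a b c ^^ max N M) S" using N iter_incr[of N "max N M"] by auto
  moreover have "x \<in> (bp_step a b c ^^ max N M) S" using M iter_incr[of M "max N M"] by auto
  ultimately have "insert x F \<subseteq> (bp_step a b c ^^ max N M) S" by simp
  then show ?case by (rule exI)
qed

lemma closure_closed:
  assumes "nbhd a b c v \<inter> X \<subseteq> bp_closure a b c S" "a + b + c \<le> card (nbhd a b c v \<inter> X)"
  shows "v \<in> bp_closure a b c S"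
proof -
  have fin: "finite (nbhd a b c v \<inter> X)" by (simp add: finite_nbhd)
  have sub: "nbhd a b c v \<inter> X \<subseteq> (\<Union>n. (bp_step a b c ^^ n) S)"
    using assms(1) by (simp add: bp_closure_def)
  obtain N where N: "nbhd a b c v \<inter> X \<subseteq> (bp_step a b c ^^ N) S"
    using finite_in_chain[OF fin sub] by blast
  have "card (nbhd a b c v \<inter> X) \<le> card (nbhd a b c v \<inter> (bp_step a b c ^^ N) S)"
    using N by (intro card_mono) (auto simp: finite_nbhd)
  then have "v \<in> bp_step a b c ((bp_step a b c ^^ N) S)" using assms(2) by (simp add: bp_step_def)
  then have "v \<in> (bp_step a b c ^^ Suc N) S" by simp
  then show ?thesis unfolding bp_closure_def by blast
qed

end

lemma all3: "(\<forall>d<3. P d) \<longleftrightarrow> P 0 \<and> P (Suc 0) \<and> P 2"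
  by (auto simp: numeral_3_eq_3 numeral_2_eq_2 less_Suc_eq)

lemma box_iff: "(x,y,z) \<in> box (x0,y0,z0) (x1,y1,z1) \<longleftrightarrow>
   x0 \<le> x \<and> x \<le> x1 \<and> y0 \<le> y \<and> y \<le> y1 \<and> z0 \<le> z \<and> z \<le> z1"
  by (simp add: box_def all3)

lemma card_line: "card ((f::int\<Rightarrow>site) ` {1..int n}) \<le> n"
  using card_image_le[of "{1..int n}" f] by simp

locale bpl =
  fixes a b c :: nat and A :: "site set" and l :: nat
  assumes a_pos: "0 < a" and ab: "a \<le> b" and bc: "b \<le> c"
begin

definition "Q = box (0,0,0) (int l, int l, int l)"
definition "rho = A \<inter> Q"

lemma out_card:
  assumes "p \<notin> Q" "S \<subseteq> Q"
  shows "card (nbhd a b c p \<inter> S) \<le> c"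
proof -
  obtain x y z where p: "p = (x,y,z)" by (cases p) auto
  have "\<exists>T. nbhd a b c p \<inter> Q \<subseteq> (T::int \<Rightarrow> site) ` {1..int c}"
  proof (cases "x < 0")
    case True
    have "nbhd a b c p \<inter> Q \<subseteq> (\<lambda>i. (x+i,y,z)) ` {1..int c}"
      using True ab bc unfolding p nbhd_eq Q_def by (auto simp: box_iff)
    then show ?thesis by blast
  next
    case F1: False
    show ?thesis
    proof (cases "x > int l")
      case True
      have "nbhd a b c p \<inter> Q \<subseteq> (\<lambda>i. (x-i,y,z)) ` {1..int c}"
        using True ab bc unfolding p nbhd_eq Q_def
        by (auto simp: box_iff image_iff intro!: bexI[where x="- _"])
      then show ?thesis by blast
    next
      case F2: False
      show ?thesis
      proof (cases "y < 0")
        case True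
        have "nbhd a b c p \<inter> Q \<subseteq> (\<lambda>i. (x,y+i,z)) ` {1..int c}"
          using True ab bc unfolding p nbhd_eq Q_def by (auto simp: box_iff)
        then show ?thesis by blast
      next
        case F3: False
        show ?thesis
        proof (cases "y > int l")
          case True
          have "nbhd a b c p \<inter> Q \<subseteq> (\<lambda>i. (x,y-i,z)) ` {1..int c}"
            using True ab bc unfolding p nbhd_eq Q_def
            by (auto simp: box_iff image_iff intro!: bexI[where x="- _"])
          then show ?thesis by blast
        next
          case F4: False
          show ?thesis
          proof (cases "z < 0")
            case True
            have "nbhd a b c p \<inter> Q \<subseteq> (\<lambda>i. (x,y,z+i)) ` {1..int c}"
              using True ab bc unfolding p nbhd_eq Q_def by (auto simp: box_iff)
            then show ?thesis by blast
          next
            case F5: False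
            have "z > int l" using assms(1) F1 F2 F3 F4 F5 unfolding p Q_def box_iff by auto
            have "nbhd a b c p \<inter> Q \<subseteq> (\<lambda>i. (x,y,z-i)) ` {1..int c}"
              using \<open>z > int l\<close> ab bc unfolding p nbhd_eq Q_def
              by (auto simp: box_iff image_iff intro!: bexI[where x="- _"])
            then show ?thesis by blast
          qed
        qed
      qed
    qed
  qed
  then obtain T where T: "nbhd a b c p \<inter> Q \<subseteq> (T::int \<Rightarrow> site) ` {1..int c}" by blast
  have "card (nbhd a b c p \<inter> S) \<le> card (T ` {1..int c})"
    using T assms(2) by (intro card_mono) auto
  also have "\<dots> \<le> c" by (rule card_line)
  finally show ?thesis .
qed

end

lemma nn_adj_iff: "nn_adj (x,y,z) (x',y',z') \<longleftrightarrow> \<bar>x-x'\<bar> + \<bar>y-y'\<bar> + \<bar>z-z'\<bar> = 1"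
  by (simp add: nn_adj_def numeral_3_eq_3 coord_def)

lemma nn_adj_sym: "nn_adj p q \<Longrightarrow> nn_adj q p"
  by (cases p; cases q) (simp add: nn_adj_iff abs_minus_commute)

lemma coord_cases: "coord d (x,y,z) = (if d = 0 then x else if d = 1 then y else z)"
  by (simp add: coord_def)

lemma nn_adj_close: "nn_adj p q \<Longrightarrow> \<bar>coord d p - coord d q\<bar> \<le> 1"
  by (cases p; cases q) (auto simp: nn_adj_iff coord_cases)

lemma nbhd_close: "q \<in> nbhd a b c p \<Longrightarrow> a \<le> c \<Longrightarrow> b \<le> c \<Longrightarrow> \<bar>coord d q - coord d p\<bar> \<le> int c"
  by (cases p) (auto simp: nbhd_eq coord_cases)

context bpl begin

lemma rho_Q: "rho \<subseteq> Q" by (auto simp: rho_def)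

lemma iter_Q: "S \<subseteq> Q \<Longrightarrow> (bp_step a b c ^^ n) S \<subseteq> Q"
proof (induction n)
  case 0 then show ?case by simp
next
  case (Suc n)
  show ?case
  proof
    fix p assume p: "p \<in> (bp_step a b c ^^ Suc n) S"
    show "p \<in> Q"
    proof (rule ccontr)
      assume "p \<notin> Q"
      then have "card (nbhd a b c p \<inter> (bp_step a b c ^^ n) S) \<le> c"
        using out_card Suc by blast
      moreover have "p \<notin> (bp_step a b c ^^ n) S" using \<open>p \<notin> Q\<close> Suc by blast
      ultimately show False using p a_pos by (simp add: bp_step_def)
    qed
  qed
qed

lemma closure_Q: "S \<subseteq> Q \<Longrightarrow> bp_closure a b c S \<subseteq> Q"
  using iter_Q unfolding bp_closure_def by blast

definition "R p q \<longleftrightarrow> nn_adj p q \<or> (p \<notin> rho \<and> q \<in> nbhd a b c p) \<or> (q \<notin> rho \<and> p \<in> nbhd a b c q)"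
definition "edge D p q \<longleftrightarrow> p \<in> D \<and> q \<in> D \<and> R p q"
definition "cc D p = {q. (edge D)\<^sup>*\<^sup>* p q}"

lemma R_sym: "R p q \<Longrightarrow> R q p"
  unfolding R_def using nn_adj_sym by blast

lemma R_close: "R p q \<Longrightarrow> \<bar>coord d p - coord d q\<bar> \<le> int c"
proof -
  assume "R p q"
  have c1: "1 \<le> c" using a_pos ab bc by simp
  show ?thesis using \<open>R p q\<close> unfolding R_def
  proof (elim disjE conjE)
    assume "nn_adj p q" then show ?thesis using nn_adj_close[of p q d] c1 by linarith
  next
    assume "q \<in> nbhd a b c p" then show ?thesis using nbhd_close[where q=q and p=p and d=d and a=a and b=b and c=c] ab bc by (simp add: abs_minus_commute)
  next
    assume "p \<in> nbhd a b c q" then show ?thesis using nbhd_close[where q=p and p=q and d=d and a=a and b=b and c=c] ab bc by simp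
  qed
qed

lemma edge_sym: "edge D p q \<Longrightarrow> edge D q p"
  unfolding edge_def using R_sym by blast

lemma rtr_sym: "(edge D)\<^sup>*\<^sup>* p q \<Longrightarrow> (edge D)\<^sup>*\<^sup>* q p"
proof (induction rule: rtranclp_induct)
  case base then show ?case by simp
next
  case (step y z)
  then show ?case using edge_sym converse_rtranclp_into_rtranclp by metis
qed

lemma rtr_mono: "(edge D)\<^sup>*\<^sup>* p q \<Longrightarrow> D \<subseteq> D' \<Longrightarrow> (edge D')\<^sup>*\<^sup>* p q"
proof (induction rule: rtranclp_induct)
  case base then show ?case by simp
next
  case (step y z)
  then have "edge D' y z" by (auto simp: edge_def)
  then show ?case using step by (meson rtranclp.rtrancl_into_rtrancl)
qed

lemma rtr_in: "(edge D)\<^sup>*\<^sup>* p q \<Longrightarrow> p \<in> D \<Longrightarrow> q \<in> D"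
  by (induction rule: rtranclp_induct) (auto simp: edge_def)

lemma comp_sub: "p \<in> D \<Longrightarrow> cc D p \<subseteq> D"
  unfolding cc_def using rtr_in by blast

lemma comp_self: "p \<in> cc D p" by (simp add: cc_def)

lemma comp_eq: "(edge D)\<^sup>*\<^sup>* p q \<Longrightarrow> cc D p = cc D q"
proof -
  assume h: "(edge D)\<^sup>*\<^sup>* p q"
  have "(edge D)\<^sup>*\<^sup>* q p" using h by (rule rtr_sym)
  show ?thesis unfolding cc_def
  proof (intro Collect_cong iffI)
    fix x assume "(edge D)\<^sup>*\<^sup>* p x" then show "(edge D)\<^sup>*\<^sup>* q x"
      using \<open>(edge D)\<^sup>*\<^sup>* q p\<close> by (rule rtranclp_trans[rotated])
  next
    fix x assume "(edge D)\<^sup>*\<^sup>* q x" then show "(edge D)\<^sup>*\<^sup>* p x"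
      using h by (rule rtranclp_trans[rotated])
  qed
qed

lemma ins_other:
  assumes "v \<notin> D" "\<not> (edge (insert v D))\<^sup>*\<^sup>* p v"
  shows "cc (insert v D) p = cc D p"
proof
  show "cc D p \<subseteq> cc (insert v D) p" unfolding cc_def using rtr_mono[of D p _ "insert v D"] by blast
next
  have "(edge (insert v D))\<^sup>*\<^sup>* p q \<Longrightarrow> (edge D)\<^sup>*\<^sup>* p q" for q
  proof (induction rule: rtranclp_induct)
    case base then show ?case by simp
  next
    case (step y z)
    have "y \<noteq> v" using step(1) assms(2) by blast
    moreover have "z \<noteq> v" using step(1,2) assms(2) by (meson rtranclp.rtrancl_into_rtrancl)
    ultimately have "edge D y z" using step(2) by (auto simp: edge_def)
    then show ?case using step(3) by (meson rtranclp.rtrancl_into_rtrancl)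
  qed
  then show "cc (insert v D) p \<subseteq> cc D p" by (auto simp: cc_def)
qed

lemma ins_v:
  assumes "v \<notin> D"
  shows "cc (insert v D) v \<subseteq> insert v (\<Union>{cc D w | w. w \<in> D \<and> R v w})"
proof -
  let ?S = "insert v (\<Union>{cc D w | w. w \<in> D \<and> R v w})"
  have "(edge (insert v D))\<^sup>*\<^sup>* v q \<Longrightarrow> q \<in> ?S" for q
  proof (induction rule: rtranclp_induct)
    case base then show ?case by simp
  next
    case (step y z)
    show ?case
    proof (cases "z = v")
      case True then show ?thesis by simp
    next
      case zv: False
      show ?thesis
      proof (cases "y = v")
        case True
        then have "z \<in> D" "R v z" using step(2) zv by (auto simp: edge_def)
        then show ?thesis using comp_self by blast
      next
        case False
        then obtain w where w: "w \<in> D" "R v w" "y \<in> cc D w" using step(3) by auto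
        have "edge D y z" using step(2) zv False by (auto simp: edge_def)
        then have "z \<in> cc D w" using w(3) unfolding cc_def
          by (simp add: rtranclp.rtrancl_into_rtrancl)
        then show ?thesis using w by blast
      qed
    qed
  qed
  then show ?thesis unfolding cc_def by blast
qed

lemma ins_sub:
  assumes "w \<in> D" "R v w"
  shows "cc D w \<subseteq> cc (insert v D) v"
proof -
  have e: "edge (insert v D) v w" using assms by (auto simp: edge_def)
  have 1: "cc D w \<subseteq> cc (insert v D) w" unfolding cc_def using rtr_mono[of D w _ "insert v D"] by blast
  have "(edge (insert v D))\<^sup>*\<^sup>* v w" using e by (rule r_into_rtranclp)
  then have "cc (insert v D) w = cc (insert v D) v" using comp_eq by metis
  then show ?thesis using 1 by simp
qed

inductive reach :: "site set \<Rightarrow> bool" where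
  r0: "reach {}"
| r1: "reach D \<Longrightarrow> v \<notin> D \<Longrightarrow> v \<in> rho \<or> a + b + c \<le> card (nbhd a b c v \<inter> D) \<Longrightarrow> reach (insert v D)"

lemma reach_Q: "reach D \<Longrightarrow> D \<subseteq> Q"
proof (induction rule: reach.induct)
  case r0 then show ?case by simp
next
  case (r1 D v)
  have "v \<in> Q"
  proof (rule ccontr)
    assume "v \<notin> Q"
    then have "v \<notin> rho" using rho_Q by blast
    have "card (nbhd a b c v \<inter> D) \<le> c" by (rule out_card[OF \<open>v \<notin> Q\<close> r1.IH])
    moreover have "a + b + c \<le> card (nbhd a b c v \<inter> D)" using r1(3) \<open>v \<notin> rho\<close> by blast
    ultimately show False using a_pos by linarith
  qed
  then show ?case using r1 by simp
qed

end

definition npath :: "site set \<Rightarrow> site \<Rightarrow> site \<Rightarrow> site list \<Rightarrow> bool" where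
  "npath S x y ps \<longleftrightarrow> ps \<noteq> [] \<and> hd ps = x \<and> last ps = y \<and> set ps \<subseteq> S \<and> successively nn_adj ps"

lemma npath_single: "x \<in> S \<Longrightarrow> npath S x x [x]"
  by (simp add: npath_def)

lemma npath_rev: "npath S x y ps \<Longrightarrow> npath S y x (rev ps)"
  unfolding npath_def
  by (auto simp: hd_rev last_rev intro: successively_mono nn_adj_sym)

lemma npath_trans:
  assumes "npath S x y ps" "npath S y z qs"
  shows "npath S x z (ps @ tl qs)"
proof (cases "tl qs = []")
  case True
  then have "qs = [y]" using assms(2) unfolding npath_def by (cases qs) auto
  then show ?thesis using assms by (simp add: npath_def)
next
  case False
  obtain q qs' where qs: "qs = q # qs'" using assms(2) unfolding npath_def by (cases qs) auto
  have q: "q = y" using assms(2) qs by (simp add: npath_def)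
  have sq: "successively nn_adj (y # qs')" using assms(2) qs q by (simp add: npath_def)
  have "qs' \<noteq> []" using False qs by simp
  then have "nn_adj y (hd qs')" "successively nn_adj qs'" using sq by (simp_all add: successively_Cons)
  then have "successively nn_adj (ps @ qs')"
    using assms(1) \<open>qs' \<noteq> []\<close> unfolding npath_def by (auto simp: successively_append_iff)
  moreover have "last (ps @ qs') = z" using assms(2) qs \<open>qs' \<noteq> []\<close> by (simp add: npath_def)
  ultimately show ?thesis using assms qs unfolding npath_def by auto
qed

lemma npath_mono: "npath S x y ps \<Longrightarrow> S \<subseteq> T \<Longrightarrow> npath T x y ps"
  by (auto simp: npath_def)

lemma succ_upt: "(\<And>i. P i (Suc i)) \<Longrightarrow> successively P [0..<n]"
proof (induction n)
  case 0 then show ?case by simp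
next
  case (Suc n)
  then show ?case by (cases n) (auto simp: successively_append_iff)
qed

definition pt :: "site \<Rightarrow> site \<Rightarrow> int \<Rightarrow> site" where
  "pt v e j = (fst v + j * fst e, fst (snd v) + j * fst (snd e), snd (snd v) + j * snd (snd e))"

lemma coord_pt: "coord d (pt v e j) = coord d v + j * coord d e"
  by (cases v; cases e) (simp add: pt_def coord_cases)

lemma seg_path:
  fixes v e :: site and m :: nat
  assumes e1: "\<bar>fst e\<bar> + \<bar>fst (snd e)\<bar> + \<bar>snd (snd e)\<bar> = 1" and m: "0 < m"
  defines "ps \<equiv> map (\<lambda>n. pt v e (int n)) [0..<Suc m]"
  shows "ps \<noteq> [] \<and> hd ps = v \<and> last ps = pt v e (int m) \<and> successively nn_adj ps \<and>
         (\<forall>w\<in>set ps. on_segment v (pt v e (int m)) w)"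
proof -
  have "successively nn_adj ps"
    unfolding ps_def successively_map
  proof (rule succ_upt)
    fix i :: nat
    show "nn_adj (pt v e (int i)) (pt v e (int (Suc i)))"
      using e1 by (cases v; cases e) (simp add: pt_def nn_adj_iff algebra_simps)
  qed
  moreover have "hd ps = v" unfolding ps_def by (cases v) (simp add: pt_def upt_conv_Cons del: upt_Suc)
  moreover have "last ps = pt v e (int m)" unfolding ps_def by simp
  moreover have "\<forall>w\<in>set ps. on_segment v (pt v e (int m)) w"
  proof
    fix w assume "w \<in> set ps"
    then obtain n where n: "n \<le> m" "w = pt v e (int n)" unfolding ps_def by (auto simp del: upt_Suc simp: less_Suc_eq_le)
    show "on_segment v (pt v e (int m)) w"
      unfolding on_segment_def
    proof (intro exI[of _ "real n / real m"] conjI allI impI)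
      show "0 \<le> real n / real m" by simp
      show "real n / real m \<le> 1" using n m by simp
      fix d :: nat
      have "real_of_int (coord d w) = real_of_int (coord d v) + real n * real_of_int (coord d e)"
        using n by (simp add: coord_pt)
      also have "\<dots> = real_of_int (coord d v) + real n / real m *
          (real_of_int (coord d (pt v e (int m))) - real_of_int (coord d v))"
        using m by (simp add: coord_pt)
      finally show "real_of_int (coord d w) = real_of_int (coord d v) + real n / real m *
          (real_of_int (coord d (pt v e (int m))) - real_of_int (coord d v))" .
    qed
  qed
  ultimately show ?thesis unfolding ps_def by simp
qed

lemma nbhd_pt:
  assumes "u \<in> nbhd a b c v"
  shows "\<exists>e m. \<bar>fst e\<bar> + \<bar>fst (snd e)\<bar> + \<bar>snd (snd e)\<bar> = 1 \<and> 0 < m \<and> u = pt v e (int m)"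
proof -
  obtain x y z where v: "v = (x,y,z)" by (cases v) auto
  have "u \<in> nbhd a b c (x,y,z)" using assms v by simp
  then show ?thesis unfolding nbhd_eq
  proof (elim UnE imageE)
    fix i assume "i \<in> {i. 1 \<le> \<bar>i\<bar> \<and> \<bar>i\<bar> \<le> int a}" "u = (x + i, y, z)"
    then show ?thesis
      by (intro exI[of _ "(sgn i, 0, 0)"] exI[of _ "nat \<bar>i\<bar>"]) (auto simp: v pt_def abs_sgn_eq sgn_if)
  next
    fix i assume "i \<in> {i. 1 \<le> \<bar>i\<bar> \<and> \<bar>i\<bar> \<le> int b}" "u = (x, y + i, z)"
    then show ?thesis
      by (intro exI[of _ "(0, sgn i, 0)"] exI[of _ "nat \<bar>i\<bar>"]) (auto simp: v pt_def abs_sgn_eq sgn_if)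
  next
    fix i assume "i \<in> {i. 1 \<le> \<bar>i\<bar> \<and> \<bar>i\<bar> \<le> int c}" "u = (x, y, z + i)"
    then show ?thesis
      by (intro exI[of _ "(0, 0, sgn i)"] exI[of _ "nat \<bar>i\<bar>"]) (auto simp: v pt_def abs_sgn_eq sgn_if)
  qed
qed

lemma seg_path2:
  assumes "u \<in> nbhd a b c v"
  shows "\<exists>ps. ps \<noteq> [] \<and> hd ps = v \<and> last ps = u \<and> successively nn_adj ps \<and>
         (\<forall>w\<in>set ps. on_segment v u w)"
  using nbhd_pt[OF assms] seg_path by metis

lemma box_mem: "p \<in> box lo hi \<longleftrightarrow> (\<forall>d<3. coord d lo \<le> coord d p \<and> coord d p \<le> coord d hi)"
  by (simp add: box_def)

lemma seg_box:
  assumes "on_segment v u w" "v \<in> box lo hi" "u \<in> box lo hi"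
  shows "w \<in> box lo hi"
proof -
  obtain t :: real where t: "0 \<le> t" "t \<le> 1"
    "\<forall>d<3. real_of_int (coord d w) = real_of_int (coord d v) + t * (real_of_int (coord d u) - real_of_int (coord d v))"
    using assms(1) unfolding on_segment_def by blast
  show ?thesis unfolding box_mem
  proof (intro allI impI conjI)
    fix d :: nat assume d: "d < 3"
    define V where "V = real_of_int (coord d v)"
    define U where "U = real_of_int (coord d u)"
    define L where "L = real_of_int (coord d lo)"
    define H where "H = real_of_int (coord d hi)"
    have w: "real_of_int (coord d w) = (1 - t) * V + t * U" using t(3) d unfolding V_def U_def by (simp add: algebra_simps)
    have VL: "L \<le> V" "V \<le> H" using assms(2) d unfolding box_mem V_def L_def H_def by auto
    have UL: "L \<le> U" "U \<le> H" using assms(3) d unfolding box_mem U_def L_def H_def by auto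
    have "(1 - t) * L \<le> (1 - t) * V" "t * L \<le> t * U" using VL UL t by (simp_all add: mult_left_mono)
    then have "L \<le> real_of_int (coord d w)" using w by (simp add: algebra_simps)
    then show "coord d lo \<le> coord d w" unfolding L_def by simp
    have "(1 - t) * V \<le> (1 - t) * H" "t * U \<le> t * H" using VL UL t by (simp_all add: mult_left_mono)
    then have "real_of_int (coord d w) \<le> H" using w by (simp add: algebra_simps)
    then show "coord d w \<le> coord d hi" unfolding H_def by simp
  qed
qed

definition mn :: "site set \<Rightarrow> nat \<Rightarrow> int" where "mn K d = Min (coord d ` K)"
definition mx :: "site set \<Rightarrow> nat \<Rightarrow> int" where "mx K d = Max (coord d ` K)"
definition bblo :: "site set \<Rightarrow> site" where "bblo K = (mn K 0, mn K 1, mn K 2)"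
definition bbhi :: "site set \<Rightarrow> site" where "bbhi K = (mx K 0, mx K 1, mx K 2)"

lemma coord_const[simp]: "coord d (x,x,x) = x"
  by (simp add: coord_def)

lemma lt3: "d < (3::nat) \<Longrightarrow> d = 0 \<or> d = 1 \<or> d = 2"
  by auto

lemma coord_bblo: "d < 3 \<Longrightarrow> coord d (bblo K) = mn K d"
  using lt3[of d] by (auto simp: bblo_def)

lemma coord_bbhi: "d < 3 \<Longrightarrow> coord d (bbhi K) = mx K d"
  using lt3[of d] by (auto simp: bbhi_def)

lemma mn_le: "finite K \<Longrightarrow> q \<in> K \<Longrightarrow> mn K d \<le> coord d q"
  by (simp add: mn_def)

lemma mx_ge: "finite K \<Longrightarrow> q \<in> K \<Longrightarrow> coord d q \<le> mx K d"
  by (simp add: mx_def)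

lemma mn_att: "finite K \<Longrightarrow> K \<noteq> {} \<Longrightarrow> \<exists>q\<in>K. coord d q = mn K d"
proof -
  assume "finite K" "K \<noteq> {}"
  then have "Min (coord d ` K) \<in> coord d ` K" by (intro Min_in) auto
  then show ?thesis unfolding mn_def by force
qed

lemma mx_att: "finite K \<Longrightarrow> K \<noteq> {} \<Longrightarrow> \<exists>q\<in>K. coord d q = mx K d"
proof -
  assume "finite K" "K \<noteq> {}"
  then have "Max (coord d ` K) \<in> coord d ` K" by (intro Max_in) auto
  then show ?thesis unfolding mx_def by force
qed

lemma in_bb: "finite K \<Longrightarrow> K \<subseteq> box (bblo K) (bbhi K)"
proof
  fix q assume "finite K" "q \<in> K"
  then show "q \<in> box (bblo K) (bbhi K)" unfolding box_mem
    by (simp add: coord_bblo coord_bbhi mn_le mx_ge)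
qed

context bpl begin

lemma finite_Q: "finite Q"
proof (rule finite_subset)
  show "Q \<subseteq> {0..int l} \<times> {0..int l} \<times> {0..int l}"
  proof
    fix p assume "p \<in> Q" then show "p \<in> {0..int l} \<times> {0..int l} \<times> {0..int l}"
      by (cases p) (simp add: Q_def box_iff)
  qed
qed simp

definition W :: "site \<Rightarrow> site \<Rightarrow> bool" where
  "W lo hi \<longleftrightarrow> (\<forall>d<3. coord d lo \<le> coord d hi) \<and> box lo hi \<subseteq> Q \<and> weakly_crossed a b c A lo hi"

lemma bb_Q: "finite K \<Longrightarrow> K \<subseteq> Q \<Longrightarrow> K \<noteq> {} \<Longrightarrow> box (bblo K) (bbhi K) \<subseteq> Q"
proof
  fix w assume K: "finite K" "K \<subseteq> Q" "K \<noteq> {}" and w: "w \<in> box (bblo K) (bbhi K)"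
  have "\<forall>d<3. 0 \<le> coord d w \<and> coord d w \<le> int l"
  proof (intro allI impI)
    fix d :: nat assume d: "d < 3"
    obtain q1 where q1: "q1 \<in> K" "coord d q1 = mn K d" using mn_att[OF K(1,3)] by blast
    obtain q2 where q2: "q2 \<in> K" "coord d q2 = mx K d" using mx_att[OF K(1,3)] by blast
    have "q1 \<in> Q" "q2 \<in> Q" using q1 q2 K by auto
    then have "0 \<le> coord d q1" "coord d q2 \<le> int l" using d unfolding Q_def box_mem by auto
    moreover have "mn K d \<le> coord d w" "coord d w \<le> mx K d"
      using w d unfolding box_mem by (auto simp: coord_bblo coord_bbhi)
    ultimately show "0 \<le> coord d w \<and> coord d w \<le> int l" using q1 q2 by simp
  qed
  then show "w \<in> Q" unfolding Q_def box_mem by auto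
qed

lemma cross:
  assumes D: "reach D" "p \<in> D" and K: "K = cc D p" and KC: "K \<subseteq> bp_closure a b c (rho \<inter> K)"
  shows "W (bblo K) (bbhi K)"
proof -
  define lo where "lo = bblo K"
  define hi where "hi = bbhi K"
  define B where "B = box lo hi"
  define CB where "CB = bp_closure a b c (A \<inter> B)"
  define E where "E = weak_enhancement a b c (A \<inter> B)"
  have KD: "K \<subseteq> D" using K comp_sub D(2) by simp
  have DQ: "D \<subseteq> Q" using reach_Q D(1) .
  have KQ: "K \<subseteq> Q" using KD DQ by simp
  have finK: "finite K" using finite_subset[OF KQ finite_Q] .
  have pK: "p \<in> K" using K comp_self by simp
  have KB: "K \<subseteq> B" unfolding B_def lo_def hi_def using in_bb[OF finK] .
  have "rho \<inter> K \<subseteq> A \<inter> B" using KB by (auto simp: rho_def)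
  then have KCB: "K \<subseteq> CB" using KC closure_mono unfolding CB_def by blast
  have CBE: "CB \<subseteq> E" unfolding CB_def E_def weak_enhancement_def Let_def by blast
  have KEB: "K \<subseteq> E \<inter> B" using KCB CBE KB by blast
  have segE: "w \<in> E \<inter> B" if x: "x \<in> K" "x \<notin> rho" "u \<in> nbhd a b c x" "u \<in> K" "on_segment x u w" for x u w
  proof
    have "x \<in> Q" using x KQ by blast
    then have "x \<notin> A \<inter> B" using x(2) by (auto simp: rho_def)
    then have "x \<in> CB - (A \<inter> B)" using KCB x(1) by blast
    moreover have "u \<in> nbhd a b c x \<inter> CB" using KCB x by blast
    ultimately show "w \<in> E" unfolding E_def weak_enhancement_def Let_def CB_def using x(5) by blast
    show "w \<in> B" unfolding B_def using seg_box[OF x(5)] KB x unfolding B_def by blast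
  qed
  have epath: "\<exists>ps. npath (E \<inter> B) y z ps" if yz: "y \<in> K" "z \<in> K" "R y z" for y z
  proof -
    consider "nn_adj y z" | "y \<notin> rho" "z \<in> nbhd a b c y" | "z \<notin> rho" "y \<in> nbhd a b c z"
      using yz(3) unfolding R_def by blast
    then show ?thesis
    proof cases
      case 1
      then have "npath (E \<inter> B) y z [y, z]" using yz KEB by (auto simp: npath_def)
      then show ?thesis by blast
    next
      case 2
      obtain ps where ps: "ps \<noteq> []" "hd ps = y" "last ps = z" "successively nn_adj ps"
        "\<forall>w\<in>set ps. on_segment y z w" using seg_path2[OF 2(2)] by blast
      have "set ps \<subseteq> E \<inter> B" using ps(5) segE[OF yz(1) 2(1) 2(2) yz(2)] by blast
      then have "npath (E \<inter> B) y z ps" using ps by (simp add: npath_def)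
      then show ?thesis by blast
    next
      case 3
      obtain ps where ps: "ps \<noteq> []" "hd ps = z" "last ps = y" "successively nn_adj ps"
        "\<forall>w\<in>set ps. on_segment z y w" using seg_path2[OF 3(2)] by blast
      have "set ps \<subseteq> E \<inter> B" using ps(5) segE[OF yz(2) 3(1) 3(2) yz(1)] by blast
      then have "npath (E \<inter> B) z y ps" using ps by (simp add: npath_def)
      then show ?thesis using npath_rev by blast
    qed
  qed
  have rpath: "(edge D)\<^sup>*\<^sup>* p q \<Longrightarrow> \<exists>ps. npath (E \<inter> B) p q ps" for q
  proof (induction rule: rtranclp_induct)
    case base then show ?case using npath_single pK KEB by blast
  next
    case (step y z)
    have yK: "y \<in> K" using step(1) K by (simp add: cc_def)
    have zK: "z \<in> K" using step(1,2) K by (simp add: cc_def rtranclp.rtrancl_into_rtrancl)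
    have "R y z" using step(2) by (simp add: edge_def)
    then obtain qs where qs: "npath (E \<inter> B) y z qs" using epath yK zK by blast
    obtain ps where ps: "npath (E \<inter> B) p y ps" using step(3) by blast
    show ?case using npath_trans[OF ps qs] by blast
  qed
  have kpath: "\<exists>ps. npath (E \<inter> B) q1 q2 ps" if "q1 \<in> K" "q2 \<in> K" for q1 q2
  proof -
    have "(edge D)\<^sup>*\<^sup>* p q1" "(edge D)\<^sup>*\<^sup>* p q2" using that K by (simp_all add: cc_def)
    then obtain ps1 ps2 where 1: "npath (E \<inter> B) p q1 ps1" and 2: "npath (E \<inter> B) p q2 ps2"
      using rpath by meson
    show ?thesis using npath_trans[OF npath_rev[OF 1] 2] by blast
  qed
  have Kne: "K \<noteq> {}" using pK by blast
  have cr: "crossed_in_dir E lo hi d" if d: "d < 3" for d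
  proof -
    obtain q1 where q1: "q1 \<in> K" "coord d q1 = mn K d" using mn_att[OF finK Kne] by blast
    obtain q2 where q2: "q2 \<in> K" "coord d q2 = mx K d" using mx_att[OF finK Kne] by blast
    obtain ps where ps: "npath (E \<inter> B) q1 q2 ps" using kpath q1 q2 by blast
    show ?thesis unfolding crossed_in_dir_def
      using ps q1 q2 d unfolding npath_def B_def lo_def hi_def
      by (auto simp: coord_bblo coord_bbhi successively_conv_nth)
  qed
  have "\<forall>d<3. coord d lo \<le> coord d hi"
  proof (intro allI impI)
    fix d :: nat assume "d < 3"
    then show "coord d lo \<le> coord d hi" unfolding lo_def hi_def
      using mn_le[OF finK pK, of d] mx_ge[OF finK pK, of d] by (simp add: coord_bblo coord_bbhi)
  qed
  moreover have "box lo hi \<subseteq> Q" unfolding lo_def hi_def using bb_Q finK KQ Kne by blast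
  moreover have "weakly_crossed a b c A lo hi"
    unfolding weakly_crossed_def internally_crossed_def using cr unfolding E_def B_def by blast
  ultimately show ?thesis unfolding W_def lo_def hi_def by blast
qed

end

lemma longest_ge:
  assumes "finite K" "q1 \<in> K" "q2 \<in> K" "d < 3"
  shows "coord d q2 - coord d q1 \<le> longest_side (bblo K) (bbhi K)"
proof -
  have "coord d q2 - coord d q1 \<le> mx K d - mn K d" using mn_le[OF assms(1,2), of d] mx_ge[OF assms(1,3), of d] by linarith
  moreover have "mx K d - mn K d \<le> longest_side (bblo K) (bbhi K)"
    using lt3[OF assms(4)] by (auto simp: longest_side_def coord_bblo coord_bbhi)
  ultimately show ?thesis by linarith
qed

lemma longest_att:
  assumes "finite K" "K \<noteq> {}"
  shows "\<exists>q1\<in>K. \<exists>q2\<in>K. \<exists>d<3. longest_side (bblo K) (bbhi K) = coord d q2 - coord d q1"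
proof -
  have "\<exists>d<3. longest_side (bblo K) (bbhi K) = mx K d - mn K d"
    unfolding longest_side_def
    by (simp add: coord_bblo coord_bbhi max_def) (metis zero_less_numeral one_less_numeral_iff semiring_norm(77) lessI numeral_2_eq_2 numeral_3_eq_3 less_Suc_eq)
  then obtain d where d: "d < 3" "longest_side (bblo K) (bbhi K) = mx K d - mn K d" by blast
  obtain q1 where "q1 \<in> K" "coord d q1 = mn K d" using mn_att[OF assms] by blast
  moreover obtain q2 where "q2 \<in> K" "coord d q2 = mx K d" using mx_att[OF assms] by blast
  ultimately show ?thesis using d by metis
qed

context bpl begin

definition Phi :: "site set \<Rightarrow> bool" where
  "Phi K \<longleftrightarrow> (\<forall>k::real. 1 \<le> k \<longrightarrow>
     (\<exists>q1\<in>K. \<exists>q2\<in>K. \<exists>d<3. k \<le> real_of_int (coord d q2 - coord d q1)) \<longrightarrow>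
     (\<exists>lo hi. W lo hi \<and> k \<le> real_of_int (longest_side lo hi) \<and>
        real_of_int (longest_side lo hi) \<le> 2 * k + 2 * real c))"

definition Inv :: "site set \<Rightarrow> bool" where
  "Inv D \<longleftrightarrow> (\<forall>p\<in>D. Phi (cc D p) \<and> cc D p \<subseteq> bp_closure a b c (rho \<inter> cc D p))"

lemma inv_step:
  assumes D: "reach D" "Inv D" "v \<notin> D" and vc: "v \<in> rho \<or> a + b + c \<le> card (nbhd a b c v \<inter> D)"
  shows "Inv (insert v D)"
proof -
  define D' where "D' = insert v D"
  define Kn where "Kn = cc D' v"
  have rD': "reach D'" unfolding D'_def using reach.r1[OF D(1,3) vc] .
  have IH: "Phi (cc D w)" "cc D w \<subseteq> bp_closure a b c (rho \<inter> cc D w)" if "w \<in> D" for w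
    using D(2) that unfolding Inv_def by auto
  have sub: "cc D w \<subseteq> Kn" if "w \<in> D" "R v w" for w
    using ins_sub[OF that] unfolding Kn_def D'_def .
  have dec: "q = v \<or> (\<exists>w. w \<in> D \<and> R v w \<and> q \<in> cc D w)" if "q \<in> Kn" for q
    using ins_v[OF D(3)] that unfolding Kn_def D'_def by blast
  have wC: "cc D w \<subseteq> bp_closure a b c (rho \<inter> Kn)" if "w \<in> D" "R v w" for w
  proof -
    have "bp_closure a b c (rho \<inter> cc D w) \<subseteq> bp_closure a b c (rho \<inter> Kn)"
      using sub[OF that] by (intro closure_mono) blast
    then show ?thesis using IH(2)[OF that(1)] by blast
  qed
  have vKn: "v \<in> Kn" unfolding Kn_def by (rule comp_self)
  have vC: "v \<in> bp_closure a b c (rho \<inter> Kn)"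
  proof (cases "v \<in> rho")
    case True then show ?thesis using vKn closure_incr by blast
  next
    case False
    then have card: "a + b + c \<le> card (nbhd a b c v \<inter> D)" using vc by blast
    have "nbhd a b c v \<inter> D \<subseteq> bp_closure a b c (rho \<inter> Kn)"
    proof
      fix u assume u: "u \<in> nbhd a b c v \<inter> D"
      then have "R v u" using False by (simp add: R_def)
      then show "u \<in> bp_closure a b c (rho \<inter> Kn)" using wC[of u] u comp_self[of u D] by blast
    qed
    then show ?thesis using closure_closed card by blast
  qed
  have KnC: "Kn \<subseteq> bp_closure a b c (rho \<inter> Kn)"
  proof
    fix q assume "q \<in> Kn"
    then show "q \<in> bp_closure a b c (rho \<inter> Kn)" using dec vC wC by blast
  qed
  have Wn: "W (bblo Kn) (bbhi Kn)"
    using cross[OF rD' _ Kn_def KnC] unfolding D'_def by simp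
  have "Kn \<subseteq> D'" unfolding Kn_def by (rule comp_sub) (simp add: D'_def)
  then have "Kn \<subseteq> Q" using reach_Q[OF rD'] by blast
  then have finKn: "finite Kn" using finite_Q by (rule finite_subset)
  have PhiKn: "Phi Kn"
    unfolding Phi_def
  proof (intro allI impI)
    fix k :: real assume k1: "1 \<le> k" and ex: "\<exists>q1\<in>Kn. \<exists>q2\<in>Kn. \<exists>d<3. k \<le> real_of_int (coord d q2 - coord d q1)"
    show "\<exists>lo hi. W lo hi \<and> k \<le> real_of_int (longest_side lo hi) \<and>
        real_of_int (longest_side lo hi) \<le> 2 * k + 2 * real c"
    proof (cases "\<forall>x\<in>Kn. \<forall>y\<in>Kn. \<forall>d<3. real_of_int (coord d y - coord d x) \<le> 2 * k + 2 * real c")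
      case True
      obtain q1 q2 d where q: "q1 \<in> Kn" "q2 \<in> Kn" "d < 3" "k \<le> real_of_int (coord d q2 - coord d q1)"
        using ex by blast
      have "k \<le> real_of_int (longest_side (bblo Kn) (bbhi Kn))"
        using longest_ge[OF finKn q(1,2,3)] q(4) by linarith
      moreover have "real_of_int (longest_side (bblo Kn) (bbhi Kn)) \<le> 2 * k + 2 * real c"
      proof -
        have "Kn \<noteq> {}" using vKn by blast
        then obtain x y d where xyd: "x \<in> Kn" "y \<in> Kn" "d < 3"
          "longest_side (bblo Kn) (bbhi Kn) = coord d y - coord d x"
          using longest_att[OF finKn] by blast
        have "real_of_int (coord d y - coord d x) \<le> 2 * k + 2 * real c" using True xyd(1-3) by blast
        then show ?thesis using xyd(4) by simp
      qed
      ultimately show ?thesis using Wn by blast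
    next
      case False
      then obtain x y d where xy: "x \<in> Kn" "y \<in> Kn" "d < 3"
        "\<not> real_of_int (coord d y - coord d x) \<le> 2 * k + 2 * real c" by blast
      have "real_of_int (coord d y - coord d v) > k + real c \<or> real_of_int (coord d v - coord d x) > k + real c"
        using xy(4) by linarith
      then show ?thesis
      proof
        assume h: "real_of_int (coord d y - coord d v) > k + real c"
        then have "y \<noteq> v" using k1 by auto
        then obtain w where w: "w \<in> D" "R v w" "y \<in> cc D w" using dec[OF xy(2)] by blast
        have "\<bar>coord d v - coord d w\<bar> \<le> int c" using R_close[OF w(2)] .
        then have "k \<le> real_of_int (coord d y - coord d w)" using h by linarith
        then have "\<exists>q1\<in>cc D w. \<exists>q2\<in>cc D w. \<exists>d<3. k \<le> real_of_int (coord d q2 - coord d q1)"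
          using w(3) comp_self[of w D] xy(3) by blast
        then show ?thesis using IH(1)[OF w(1)] k1 unfolding Phi_def by blast
      next
        assume h: "real_of_int (coord d v - coord d x) > k + real c"
        then have "x \<noteq> v" using k1 by auto
        then obtain w where w: "w \<in> D" "R v w" "x \<in> cc D w" using dec[OF xy(1)] by blast
        have "\<bar>coord d v - coord d w\<bar> \<le> int c" using R_close[OF w(2)] .
        then have "k \<le> real_of_int (coord d w - coord d x)" using h by linarith
        then have "\<exists>q1\<in>cc D w. \<exists>q2\<in>cc D w. \<exists>d<3. k \<le> real_of_int (coord d q2 - coord d q1)"
          using w(3) comp_self[of w D] xy(3) by blast
        then show ?thesis using IH(1)[OF w(1)] k1 unfolding Phi_def by blast
      qed
    qed
  qed
  show ?thesis unfolding Inv_def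
  proof
    fix p assume p: "p \<in> insert v D"
    show "Phi (cc (insert v D) p) \<and> cc (insert v D) p \<subseteq> bp_closure a b c (rho \<inter> cc (insert v D) p)"
    proof (cases "p \<noteq> v \<and> \<not> (edge (insert v D))\<^sup>*\<^sup>* p v")
      case True
      then have "cc (insert v D) p = cc D p" "p \<in> D" using ins_other[OF D(3)] p by auto
      then show ?thesis using IH[of p] by simp
    next
      case False
      then have "cc (insert v D) p = Kn" unfolding Kn_def D'_def using comp_eq by blast
      then show ?thesis using PhiKn KnC by simp
    qed
  qed
qed

lemma reach_inv: "reach D \<Longrightarrow> Inv D"
proof (induction rule: reach.induct)
  case r0 then show ?case by (simp add: Inv_def)
next
  case (r1 D v) then show ?case using inv_step by blast
qed

end

context bpl begin

lemma reach_union: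
  assumes "reach D" "finite X" "\<forall>x\<in>X. x \<in> rho \<or> a + b + c \<le> card (nbhd a b c x \<inter> D)"
  shows "reach (D \<union> X)"
  using assms(2,3)
proof (induction X rule: finite_induct)
  case empty then show ?case using assms(1) by simp
next
  case (insert x F)
  then have IH: "reach (D \<union> F)" by blast
  show ?case
  proof (cases "x \<in> D \<union> F")
    case True
    then have "D \<union> insert x F = D \<union> F" by blast
    then show ?thesis using IH by simp
  next
    case False
    have "x \<in> rho \<or> a + b + c \<le> card (nbhd a b c x \<inter> D)" using insert.prems by blast
    moreover have "card (nbhd a b c x \<inter> D) \<le> card (nbhd a b c x \<inter> (D \<union> F))"
      by (intro card_mono) (auto simp: finite_nbhd)
    ultimately have "x \<in> rho \<or> a + b + c \<le> card (nbhd a b c x \<inter> (D \<union> F))" by linarith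
    from reach.r1[OF IH False this] show ?thesis by simp
  qed
qed

lemma reach_iter: "reach ((bp_step a b c ^^ n) rho)"
proof (induction n)
  case 0
  have "finite rho" using rho_Q finite_Q finite_subset by blast
  then have "reach ({} \<union> rho)" using reach_union[OF reach.r0] by blast
  then show ?case by simp
next
  case (Suc n)
  define S where "S = (bp_step a b c ^^ n) rho"
  define X where "X = {p. a + b + c \<le> card (nbhd a b c p \<inter> S)}"
  have eq: "(bp_step a b c ^^ Suc n) rho = S \<union> X" unfolding S_def X_def by (simp add: bp_step_def)
  have "X \<subseteq> Q" using iter_Q[OF rho_Q, of "Suc n"] eq by blast
  then have "finite X" using finite_Q finite_subset by blast
  moreover have "\<forall>x\<in>X. x \<in> rho \<or> a + b + c \<le> card (nbhd a b c x \<inter> S)" unfolding X_def by blast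
  ultimately have "reach (S \<union> X)" using reach_union Suc.IH unfolding S_def by blast
  then show ?case using eq by simp
qed

lemma line_conn:
  assumes "Q \<subseteq> D"
  shows "i \<le> l \<Longrightarrow> (edge D)\<^sup>*\<^sup>* (0,0,0) (int i, 0, 0)"
proof (induction i)
  case 0 then show ?case by simp
next
  case (Suc i)
  have "(int i, 0, 0) \<in> Q" "(int (Suc i), 0, 0) \<in> Q" using Suc.prems by (simp_all add: Q_def box_iff)
  moreover have "nn_adj (int i, 0, 0) (int (Suc i), 0, 0)" by (simp add: nn_adj_iff)
  ultimately have "edge D (int i, 0, 0) (int (Suc i), 0, 0)" using assms by (auto simp: edge_def R_def)
  then show ?case using Suc by (meson Suc_leD rtranclp.rtrancl_into_rtrancl)
qed

lemma main:
  assumes sp: "internally_spanned a b c A Q" and k: "1 \<le> k" "k \<le> real l"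
  shows "\<exists>lo hi. W lo hi \<and> k \<le> real_of_int (longest_side lo hi) \<and>
        real_of_int (longest_side lo hi) \<le> 2 * k + 2 * real c"
proof -
  have "Q \<subseteq> (\<Union>n. (bp_step a b c ^^ n) rho)"
    using sp unfolding internally_spanned_def bp_closure_def rho_def by simp
  then obtain N where N: "Q \<subseteq> (bp_step a b c ^^ N) rho" using finite_in_chain finite_Q by blast
  define D where "D = (bp_step a b c ^^ N) rho"
  have rD: "reach D" unfolding D_def by (rule reach_iter)
  have p0: "(0,0,0) \<in> D" using N unfolding D_def by (auto simp: Q_def box_iff)
  have Phi: "Phi (cc D (0,0,0))" using reach_inv[OF rD] p0 unfolding Inv_def by blast
  have "(edge D)\<^sup>*\<^sup>* (0,0,0) (int l, 0, 0)" using line_conn[of D l] N unfolding D_def by simp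
  then have q2: "(int l, 0, 0) \<in> cc D (0,0,0)" by (simp add: cc_def)
  have q1: "(0,0,0) \<in> cc D (0,0,0)" by (rule comp_self)
  have "k \<le> real_of_int (coord 0 (int l, 0::int, 0::int) - coord 0 (0::int,0::int,0::int))" using k by simp
  then have "\<exists>q1\<in>cc D (0,0,0). \<exists>q2\<in>cc D (0,0,0). \<exists>d<3. k \<le> real_of_int (coord d q2 - coord d q1)"
    using q1 q2 by (meson zero_less_numeral)
  then show ?thesis using Phi k unfolding Phi_def by blast
qed

end

theorem lemma1:
  fixes a b c :: nat
  assumes "0 < a" and "a \<le> b" and "b \<le> c"
  shows "\<exists>K L :: real. K > 0 \<and>
    (\<forall>(l::nat) (A::site set).
       internally_spanned a b c A (box (0, 0, 0) (int l, int l, int l)) \<longrightarrow>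
       (\<forall>k::real. 1 \<le> k \<and> k \<le> (real l - L) / K \<longrightarrow>
          (\<exists>lo hi. (\<forall>d<3. coord d lo \<le> coord d hi) \<and>
             box lo hi \<subseteq> box (0, 0, 0) (int l, int l, int l) \<and>
             k \<le> real_of_int (longest_side lo hi) \<and>
             real_of_int (longest_side lo hi) \<le> K * k + L \<and>
             weakly_crossed a b c A lo hi)))"
proof -
  have main2: "\<exists>lo hi. (\<forall>d<3. coord d lo \<le> coord d hi) \<and>
             box lo hi \<subseteq> box (0, 0, 0) (int l, int l, int l) \<and>
             k \<le> real_of_int (longest_side lo hi) \<and>
             real_of_int (longest_side lo hi) \<le> 2 * k + 2 * real c \<and>
             weakly_crossed a b c A lo hi"
    if sp: "internally_spanned a b c A (box (0, 0, 0) (int l, int l, int l))"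
    and k: "1 \<le> k" "k \<le> (real l - 2 * real c) / 2" for l A k
  proof -
    interpret bpl a b c A l using assms by unfold_locales
    have "2 * k \<le> real l - 2 * real c" using k by (simp add: field_simps)
    then have kl: "k \<le> real l" using k by linarith
    have "internally_spanned a b c A Q" using sp by (simp add: Q_def)
    from main[OF this k(1) kl] obtain lo hi where
      "W lo hi" "k \<le> real_of_int (longest_side lo hi)"
      "real_of_int (longest_side lo hi) \<le> 2 * k + 2 * real c" by blast
    then show ?thesis unfolding W_def Q_def by blast
  qed
  show ?thesis
    apply (rule exI[of _ 2], rule exI[of _ "2 * real c"])
    apply (intro conjI allI impI)
     apply simp
    apply (erule conjE)
    apply (rule main2)
      apply assumption+
    done
qed

end
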